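(* Let $m\in\mathbb{Z}$ and let $h_1,h_2:\mathbb{Z}\to\mathbb{C}$ be functions decreasing sufficiently rapidly at infinity (so that all series below converge absolutely). Then $$\sum_{n\in\mathbb{Z}}\sum_{k=0}^{\infty}(-1)^n\,h_1\!\left(\frac{m+n+|n+m|}{2}+k\right)h_2\!\left(\frac{n-m-|n+m|}{2}-k\right)=\left(\sum_{k=0}^{\infty}(-1)^k h_1(k)\right)\left(\sum_{n=0}^{\infty}(-1)^{m+n}h_2(-m-n)\right).$$ *)

theory Defs
  imports "HOL-Analysis.Analysis"
begin

end

theory Submission
  imports Defs
begin

lemma powi_m1: "(-1::complex) powi n = (if even n then 1 else -1)"
  by (simp add: power_int_minus_left)

lemma norm_powi: "norm ((-1::complex) powi n) = 1"
  by (simp add: powi_m1)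

lemma pow_m1: "(-1::complex) ^ k = (if even k then 1 else -1)"
  by (simp add: minus_one_power_iff)

lemma nat_sum_from_int:
  fixes h :: "int \<Rightarrow> complex" and c :: int
  assumes "(\<lambda>x. norm (h x)) summable_on UNIV"
  shows "(\<lambda>k::nat. norm (h (c + int k))) summable_on UNIV"
        "(\<lambda>k::nat. norm (h (c - int k))) summable_on UNIV"
proof -
  have i1: "inj (\<lambda>k::nat. c + int k)" by (auto simp: inj_def)
  have i2: "inj (\<lambda>k::nat. c - int k)" by (auto simp: inj_def)
  have "(\<lambda>x. norm (h x)) summable_on range (\<lambda>k::nat. c + int k)"
    using assms summable_on_subset_banach by blast
  then show "(\<lambda>k::nat. norm (h (c + int k))) summable_on UNIV"
    using summable_on_reindex[OF i1, of "\<lambda>x. norm (h x)"] by (simp add: o_def)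
  have "(\<lambda>x. norm (h x)) summable_on range (\<lambda>k::nat. c - int k)"
    using assms summable_on_subset_banach by blast
  then show "(\<lambda>k::nat. norm (h (c - int k))) summable_on UNIV"
    using summable_on_reindex[OF i2, of "\<lambda>x. norm (h x)"] by (simp add: o_def)
qed

lemma prod_abs_summable:
  fixes u v :: "nat \<Rightarrow> complex"
  assumes "(\<lambda>x. norm (u x)) summable_on UNIV" "(\<lambda>x. norm (v x)) summable_on UNIV"
  shows "(\<lambda>(a,b). u a * v b) summable_on (UNIV \<times> UNIV)"
proof -
  have "(\<lambda>x. norm (((\<lambda>(a,b). u a * v b) :: nat \<times> nat \<Rightarrow> complex) x)) summable_on (Sigma UNIV (\<lambda>_. UNIV))"
  proof (rule iffD2[OF Infinite_Sum.abs_summable_on_Sigma_iff[where f="\<lambda>(a,b). u a * v b" and A=UNIV and B="\<lambda>_. UNIV"]], intro conjI ballI)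
    fix x
    show "(\<lambda>y. norm ((\<lambda>(a,b). u a * v b) (x, y))) summable_on UNIV"
      using summable_on_cmult_right[OF assms(2), of "norm (u x)"] by (simp add: norm_mult)
  next
    have "(\<lambda>x. norm (u x) * infsum (\<lambda>y. norm (v y)) UNIV) summable_on UNIV"
      using summable_on_cmult_left[OF assms(1)] by simp
    then show "(\<lambda>x. norm (\<Sum>\<^sub>\<infinity>y\<in>UNIV. norm ((\<lambda>(a,b). u a * v b) (x, y)))) summable_on UNIV"
      by (simp add: norm_mult infsum_cmult_right' infsum_nonneg)
  qed
  then show ?thesis using abs_summable_summable by blast
qed

theorem lemma2:
  fixes m :: int and h1 h2 :: "int \<Rightarrow> complex"
  assumes "(\<lambda>x. norm (h1 x)) summable_on UNIV" and "(\<lambda>x. norm (h2 x)) summable_on UNIV"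
  shows "(\<Sum>\<^sub>\<infinity>n::int. \<Sum>\<^sub>\<infinity>k::nat.
            (-1) powi n * h1 ((m + n + \<bar>n + m\<bar>) div 2 + int k)
                        * h2 ((n - m - \<bar>n + m\<bar>) div 2 - int k))
       = (\<Sum>\<^sub>\<infinity>k::nat. (-1) ^ k * h1 (int k))
         * (\<Sum>\<^sub>\<infinity>n::nat. (-1) powi (m + int n) * h2 (- m - int n))"
proof -
  define u where "u = (\<lambda>k::nat. (-1::complex) ^ k * h1 (int k))"
  define v where "v = (\<lambda>n::nat. (-1::complex) powi (m + int n) * h2 (- m - int n))"
  define g where "g = (\<lambda>(n::int, k::nat). (-1::complex) powi n * h1 ((m + n + \<bar>n + m\<bar>) div 2 + int k)
                        * h2 ((n - m - \<bar>n + m\<bar>) div 2 - int k))"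
  define f where "f = (\<lambda>(a::nat, b::nat). u a * v b)"
  define j where "j = (\<lambda>(n::int, k::nat). if n + m \<ge> 0 then (nat (n+m) + k, k) else (k, k + nat (-m-n)))"
  define i where "i = (\<lambda>(a::nat, b::nat). if b \<le> a then (int a - int b - m, b) else (-m - (int b - int a), a))"
  have nu: "(\<lambda>x. norm (u x)) summable_on UNIV"
    using nat_sum_from_int(1)[OF assms(1), of 0] by (simp add: u_def norm_mult norm_power)
  have nv: "(\<lambda>x. norm (v x)) summable_on UNIV"
    using nat_sum_from_int(2)[OF assms(2), of "-m"]
    by (simp add: v_def norm_mult norm_powi)
  have fs: "f summable_on UNIV \<times> UNIV"
    using prod_abs_summable[OF nu nv] by (simp add: f_def)
  have ij: "i (j a) = a" for a
    by (cases a) (auto simp: i_def j_def)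
  have ji: "j (i b) = b" for b
    by (cases b) (auto simp: i_def j_def)
  have fj: "f (j a) = g a" for a
  proof (cases a)
    case (Pair n k)
    show ?thesis
    proof (cases "n + m \<ge> 0")
      case True
      have e1: "(m + n + \<bar>n + m\<bar>) div 2 = n + m" using True by simp
      have e2: "(n - m - \<bar>n + m\<bar>) div 2 = - m" using True by simp
      have e3: "int (nat (n+m) + k) = n + m + int k" using True by simp
      have e4: "- (2 * m) div 2 = - m" by simp
      have sg: "(-1::complex) ^ (nat (n+m) + k) * (-1) powi (m + int k) = (-1) powi n"
        unfolding pow_m1 powi_m1 using True
        by (auto simp: even_add even_nat_iff)
      show ?thesis using True
        by (simp add: Pair f_def g_def j_def u_def v_def e1 e2 e3 e4 flip: sg)
    next
      case False
      have e1: "(m + n + \<bar>n + m\<bar>) div 2 = 0" using False by simp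
      have e2: "(n - m - \<bar>n + m\<bar>) div 2 = n" using False by simp
      have e3: "- m - int (k + nat (-m-n)) = n - int k" using False by simp
      have sg: "(-1::complex) ^ k * (-1) powi (m + int (k + nat (-m-n))) = (-1) powi n"
        unfolding pow_m1 powi_m1 using False
        by (auto simp: even_add even_nat_iff)
      show ?thesis using False
        by (simp add: Pair f_def g_def j_def u_def v_def e1 e2 e3 flip: sg)
    qed
  qed
  have gs: "g summable_on UNIV \<times> UNIV"
    using summable_on_reindex_bij_witness[of "UNIV \<times> UNIV" i j "UNIV \<times> UNIV" f g] ij ji fj fs
    by auto
  have "infsum g (UNIV \<times> UNIV) = infsum f (UNIV \<times> UNIV)"
    using infsum_reindex_bij_witness[of "UNIV \<times> UNIV" i j "UNIV \<times> UNIV" f g] ij ji fj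
    by auto
  have L: "(\<Sum>\<^sub>\<infinity>n::int. \<Sum>\<^sub>\<infinity>k::nat. g (n, k)) = infsum g (UNIV \<times> UNIV)"
    using infsum_Sigma_banach[of g UNIV "\<lambda>_. UNIV"] gs by simp
  have R: "(\<Sum>\<^sub>\<infinity>a::nat. \<Sum>\<^sub>\<infinity>b::nat. f (a, b)) = infsum f (UNIV \<times> UNIV)"
    using infsum_Sigma_banach[of f UNIV "\<lambda>_. UNIV"] fs by simp
  have R2: "(\<Sum>\<^sub>\<infinity>a::nat. \<Sum>\<^sub>\<infinity>b::nat. f (a, b)) = infsum u UNIV * infsum v UNIV"
    by (simp add: f_def infsum_cmult_right' infsum_cmult_left')
  show ?thesis
    using L R R2 \<open>infsum g (UNIV \<times> UNIV) = infsum f (UNIV \<times> UNIV)\<close>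
    by (simp add: g_def u_def v_def)
qed

end
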